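(* Let $G\subset\mathbb R^r$ be a lattice of rank $r$ and let $\mathcal D$ be a linear partial differential operator on $\mathbb R^r$ with continuous $G$-periodic (real or complex) coefficients. Let $\mathcal S$ be the space of all classical global solutions $u$ of $\mathcal Du=0$ on $\mathbb R^r$, and $\mathcal S^G$ the subspace of $G$-periodic solutions. If $\dim\mathcal S^G<\infty$, then $\dim P_n^G(\mathcal S)<\infty$ for every $n\in\mathbb Z_+$, where $$P_n^G(\mathcal S)=\Big\{p=\sum_{j_1+\dots+j_r\le n}f_{j_1,\dots,j_r}(x)\,x_1^{j_1}\cdots x_r^{j_r}\ :\ \text{all } f_{j_1,\dots,j_r}\text{ continuous and } G\text{-periodic},\ \mathcal Dp=0\Big\}.$$
   Context: A function $f$ on $\mathbb R^r$ is $G$-periodic if $f(x+g)=f(x)$ for all $g\in G$, $x\in\mathbb R^r$; $x_1,\dots,x_r$ are the standard coordinates. *)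

theory Defs
  imports "HOL-Analysis.Analysis"
begin

text \<open>Lattice of full rank r in R^r (here R^r = real^'n, r = CARD('n)):
  the integer span of a basis.\<close>
definition full_lattice :: "(real^'n) set \<Rightarrow> bool" where
  "full_lattice G \<longleftrightarrow> (\<exists>b :: 'n \<Rightarrow> real^'n. inj b \<and> independent (range b) \<and>
      G = {(\<Sum>i\<in>UNIV. of_int (k i) *\<^sub>R b i) | k :: 'n \<Rightarrow> int. True})"

definition periodic_wrt :: "(real^'n) set \<Rightarrow> (real^'n \<Rightarrow> 'a) \<Rightarrow> bool" where
  "periodic_wrt G f \<longleftrightarrow> (\<forall>g\<in>G. \<forall>x. f (x + g) = f x)"

definition partial :: "'n \<Rightarrow> (real^'n \<Rightarrow> complex) \<Rightarrow> real^'n \<Rightarrow> complex" where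
  "partial i u x = vector_derivative (\<lambda>t. u (x + t *\<^sub>R axis i 1)) (at 0)"

fun pdl :: "'n list \<Rightarrow> (real^'n \<Rightarrow> complex) \<Rightarrow> real^'n \<Rightarrow> complex" where
  "pdl [] u = u"
| "pdl (i # w) u = partial i (pdl w u)"

definition Ck :: "nat \<Rightarrow> (real^'n \<Rightarrow> complex) \<Rightarrow> bool" where
  "Ck m u \<longleftrightarrow> (\<forall>w. length w \<le> m \<longrightarrow> continuous_on UNIV (pdl w u)) \<and>
     (\<forall>w i x. length w < m \<longrightarrow>
        ((\<lambda>t. pdl w u (x + t *\<^sub>R axis i 1)) has_vector_derivative pdl (i # w) u x) (at 0))"

definition Dop :: "nat \<Rightarrow> ('n list \<Rightarrow> real^'n \<Rightarrow> complex) \<Rightarrow> (real^'n \<Rightarrow> complex) \<Rightarrow> real^'n \<Rightarrow> complex" where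
  "Dop m a u x = (\<Sum>w\<in>{w. length w \<le> m}. a w x * pdl w u x)"

definition solutions :: "nat \<Rightarrow> ('n list \<Rightarrow> real^'n \<Rightarrow> complex) \<Rightarrow> (real^'n \<Rightarrow> complex) set" where
  "solutions m a = {u. Ck m u \<and> (\<forall>x. Dop m a u x = 0)}"

definition fin_dim :: "('a \<Rightarrow> complex) set \<Rightarrow> bool" where
  "fin_dim V \<longleftrightarrow> (\<exists>B. finite B \<and> V \<subseteq> {(\<lambda>x. \<Sum>b\<in>B. c b * b x) | c. True})"

definition monom :: "('n \<Rightarrow> nat) \<Rightarrow> real^'n \<Rightarrow> complex" where
  "monom j x = complex_of_real (\<Prod>i\<in>UNIV. (x $ i) ^ j i)"

definition PnG :: "nat \<Rightarrow> (real^'n) set \<Rightarrow> (real^'n \<Rightarrow> complex) set \<Rightarrow> (real^'n \<Rightarrow> complex) set" where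
  "PnG n G S = {p \<in> S. \<exists>f :: ('n \<Rightarrow> nat) \<Rightarrow> real^'n \<Rightarrow> complex.
      (\<forall>j. continuous_on UNIV (f j) \<and> periodic_wrt G (f j)) \<and>
      p = (\<lambda>x. \<Sum>j\<in>{j. (\<Sum>i\<in>UNIV. j i) \<le> n}. f j x * monom j x)}"

end

theory Submission
  imports Defs "HOL-Library.Function_Algebras"
begin


definition fscale :: "complex \<Rightarrow> ('a \<Rightarrow> complex) \<Rightarrow> 'a \<Rightarrow> complex" where
  "fscale c f = (\<lambda>x. c * f x)"

lemma vs_fscale: "vector_space fscale"
  by unfold_locales (auto simp: fscale_def fun_eq_iff algebra_simps)

lemma sum_fun_apply2: "(sum h B) x = (\<Sum>b\<in>B. h b x)" for h :: "'b \<Rightarrow> 'a \<Rightarrow> complex"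
proof (cases "finite B")
  case True then show ?thesis by (induction B) auto
qed simp

lemma fin_dim_span: "fin_dim V \<longleftrightarrow> (\<exists>B. finite B \<and> V \<subseteq> module.span fscale B)"
proof -
  interpret A: vector_space "fscale :: complex \<Rightarrow> ('a \<Rightarrow> complex) \<Rightarrow> _" by (rule vs_fscale)
  have e: "finite B \<Longrightarrow> A.span B = {(\<lambda>x. \<Sum>b\<in>B. c b * b x) | c. True}" for B
    by (auto simp: A.span_finite sum_fun_apply2 fscale_def fun_eq_iff)
  show ?thesis unfolding fin_dim_def
  proof
    assume "\<exists>B. finite B \<and> V \<subseteq> {\<lambda>x. \<Sum>b\<in>B. c b * b x |c. True}"
    then obtain B where "finite B" "V \<subseteq> {\<lambda>x. \<Sum>b\<in>B. c b * b x |c. True}" by blast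
    then show "\<exists>B. finite B \<and> V \<subseteq> A.span B" using e[of B] by auto
  next
    assume "\<exists>B. finite B \<and> V \<subseteq> A.span B"
    then obtain B where "finite B" "V \<subseteq> A.span B" by blast
    then show "\<exists>B. finite B \<and> V \<subseteq> {\<lambda>x. \<Sum>b\<in>B. c b * b x |c. True}" using e[of B] by auto
  qed
qed

lemma fin_dim_kernel:
  fixes V :: "('a \<Rightarrow> complex) set" and L :: "('a \<Rightarrow> complex) \<Rightarrow> ('b \<Rightarrow> complex)"
  assumes z: "0 \<in> V"
    and sub: "\<And>u v c. u \<in> V \<Longrightarrow> v \<in> V \<Longrightarrow> fscale c u + v \<in> V"
    and lin: "\<And>u v c. u \<in> V \<Longrightarrow> v \<in> V \<Longrightarrow> L (fscale c u + v) = fscale c (L u) + L v"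
    and im: "fin_dim (L ` V)" and ker: "fin_dim {v\<in>V. L v = 0}"
  shows "fin_dim V"
proof -
  interpret A: vector_space "fscale :: complex \<Rightarrow> ('a \<Rightarrow> complex) \<Rightarrow> _" by (rule vs_fscale)
  interpret B: vector_space "fscale :: complex \<Rightarrow> ('b \<Rightarrow> complex) \<Rightarrow> _" by (rule vs_fscale)
  have L0: "L 0 = 0"
  proof -
    have "L (fscale 1 0 + 0) = fscale 1 (L 0) + L 0" using lin z by blast
    moreover have "fscale 1 0 + 0 = (0::'a\<Rightarrow>complex)" by (simp add: fscale_def fun_eq_iff)
    moreover have "fscale 1 (L 0) + L 0 = L 0 + L 0" by (simp add: fscale_def fun_eq_iff)
    ultimately show ?thesis by simp
  qed
  have sums: "(\<Sum>b\<in>S. fscale (c b) (q b)) \<in> V \<and> L (\<Sum>b\<in>S. fscale (c b) (q b)) = (\<Sum>b\<in>S. fscale (c b) (L (q b)))"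
    if "finite S" "\<forall>b\<in>S. q b \<in> V" for S c q
    using that
  proof (induction S)
    case empty then show ?case by (simp only: sum.empty z L0 simp_thms)
  next
    case (insert x F)
    have e: "(\<Sum>b\<in>insert x F. h b) = h x + (\<Sum>b\<in>F. h b)" for h :: "'c \<Rightarrow> 'a \<Rightarrow> complex"
      using insert(1,2) by (rule sum.insert)
    have e2: "(\<Sum>b\<in>insert x F. h b) = h x + (\<Sum>b\<in>F. h b)" for h :: "'c \<Rightarrow> 'b \<Rightarrow> complex"
      using insert(1,2) by (rule sum.insert)
    have qx: "q x \<in> V" using insert by blast
    have IH: "(\<Sum>b\<in>F. fscale (c b) (q b)) \<in> V \<and> L (\<Sum>b\<in>F. fscale (c b) (q b)) = (\<Sum>b\<in>F. fscale (c b) (L (q b)))"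
      using insert by blast
    show ?case unfolding e e2 using sub[OF qx conjunct1[OF IH]] lin[OF qx conjunct1[OF IH]] IH by metis
  qed
  obtain C where C: "finite C" "L ` V \<subseteq> B.span C" using im fin_dim_span by blast
  obtain K where K: "finite K" "{v\<in>V. L v = 0} \<subseteq> A.span K" using ker fin_dim_span by blast
  obtain Bs where Bs: "Bs \<subseteq> L ` V" "B.independent Bs" "L ` V \<subseteq> B.span Bs"
    using B.maximal_independent_subset by blast
  have fB: "finite Bs" using B.independent_span_bound[OF C(1) Bs(2)] Bs(1) C(2) by blast
  have "\<forall>b\<in>Bs. \<exists>v. v \<in> V \<and> L v = b" using Bs(1) by blast
  then obtain p where p: "\<And>b. b \<in> Bs \<Longrightarrow> p b \<in> V \<and> L (p b) = b" by metis
  have "V \<subseteq> A.span (p ` Bs \<union> K)"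
  proof
    fix v assume v: "v \<in> V"
    then have "L v \<in> B.span Bs" using Bs(3) by blast
    then obtain c where c: "L v = (\<Sum>b\<in>Bs. fscale (c b) b)" using B.span_finite[OF fB] by auto
    define w where "w = (\<Sum>b\<in>Bs. fscale (c b) (p b))"
    have w: "w \<in> V" "L w = L v" using sums[of Bs p c] fB p c unfolding w_def by auto
    have wsp: "w \<in> A.span (p ` Bs \<union> K)" unfolding w_def
      by (intro A.span_sum A.span_scale A.span_base) auto
    have d: "fscale (-1) w + v \<in> V" using sub w v by blast
    have "L (fscale (-1) w + v) = fscale (-1) (L w) + L v" using lin w v by blast
    also have "\<dots> = 0" using w by (simp add: fscale_def fun_eq_iff)
    finally have "fscale (-1) w + v \<in> A.span K" using K d by blast
    then have "fscale (-1) w + v \<in> A.span (p ` Bs \<union> K)" using A.span_mono by blast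
    then have "w + (fscale (-1) w + v) \<in> A.span (p ` Bs \<union> K)" using wsp A.span_add by blast
    moreover have "w + (fscale (-1) w + v) = v" by (simp add: fscale_def fun_eq_iff)
    ultimately show "v \<in> A.span (p ` Bs \<union> K)" by simp
  qed
  moreover have "finite (p ` Bs \<union> K)" using fB K(1) by blast
  ultimately have "\<exists>B. finite B \<and> V \<subseteq> A.span B" by (intro exI conjI)
  then show ?thesis by (simp only: fin_dim_span)
qed



lemma pdl_transl: "pdl w (\<lambda>x. u (x + g)) = (\<lambda>x. pdl w u (x + g))"
proof (induction w)
  case Nil then show ?case by simp
next
  case (Cons i w)
  show ?case
  proof
    fix y
    have "pdl (i # w) (\<lambda>x. u (x + g)) y = vector_derivative (\<lambda>t. pdl w u (y + t *\<^sub>R axis i 1 + g)) (at 0)"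
      by (simp add: Cons partial_def)
    also have "\<dots> = vector_derivative (\<lambda>t. pdl w u ((y + g) + t *\<^sub>R axis i 1)) (at 0)"
      by (simp add: add_ac)
    also have "\<dots> = pdl (i # w) u (y + g)" by (simp add: partial_def)
    finally show "pdl (i # w) (\<lambda>x. u (x + g)) y = pdl (i # w) u (y + g)" .
  qed
qed

lemma Ck_transl: assumes "Ck m u" shows "Ck m (\<lambda>x. u (x + g))"
  unfolding Ck_def pdl_transl
proof (intro conjI allI impI)
  fix w :: "'a list" assume "length w \<le> m"
  then have c: "continuous_on UNIV (pdl w u)" using assms by (simp add: Ck_def)
  show "continuous_on UNIV (\<lambda>x. pdl w u (x + g))"
    by (rule continuous_on_compose2[OF c]) (auto intro!: continuous_intros)
next
  fix w :: "'a list" and i x assume "length w < m"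
  then have "((\<lambda>t. pdl w u ((x + g) + t *\<^sub>R axis i 1)) has_vector_derivative pdl (i # w) u (x + g)) (at 0)"
    using assms by (simp add: Ck_def)
  then show "((\<lambda>t. pdl w u (x + t *\<^sub>R axis i 1 + g)) has_vector_derivative pdl (i # w) u (x + g)) (at 0)"
    by (simp add: add_ac)
qed

lemma pdl_lin:
  assumes u: "Ck m u" and v: "Ck m v" and "length w \<le> m"
  shows "pdl w (\<lambda>x. c * u x + v x) = (\<lambda>x. c * pdl w u x + pdl w v x)"
  using assms(3)
proof (induction w)
  case Nil then show ?case by simp
next
  case (Cons i w)
  then have lw: "length w < m" "length w \<le> m" by auto
  show ?case
  proof
    fix y
    have du: "((\<lambda>t. pdl w u (y + t *\<^sub>R axis i 1)) has_vector_derivative pdl (i # w) u y) (at 0)"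
      using u lw by (simp add: Ck_def)
    have dv: "((\<lambda>t. pdl w v (y + t *\<^sub>R axis i 1)) has_vector_derivative pdl (i # w) v y) (at 0)"
      using v lw by (simp add: Ck_def)
    have d: "((\<lambda>t. c * pdl w u (y + t *\<^sub>R axis i 1) + pdl w v (y + t *\<^sub>R axis i 1)) has_vector_derivative
         c * pdl (i # w) u y + pdl (i # w) v y) (at 0)"
      by (intro has_vector_derivative_add has_vector_derivative_mult_right du dv)
    have "pdl (i # w) (\<lambda>x. c * u x + v x) y =
       vector_derivative (\<lambda>t. c * pdl w u (y + t *\<^sub>R axis i 1) + pdl w v (y + t *\<^sub>R axis i 1)) (at 0)"
      using Cons.IH lw by (simp add: partial_def)
    also have "\<dots> = c * pdl (i # w) u y + pdl (i # w) v y" by (rule vector_derivative_at[OF d])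
    finally show "pdl (i # w) (\<lambda>x. c * u x + v x) y = c * pdl (i # w) u y + pdl (i # w) v y" .
  qed
qed

lemma Ck_lin:
  assumes u: "Ck m u" and v: "Ck m v"
  shows "Ck m (\<lambda>x. c * u x + v x)"
  unfolding Ck_def
proof (intro conjI allI impI)
  fix w :: "'a list" assume lw: "length w \<le> m"
  have "continuous_on UNIV (pdl w u)" "continuous_on UNIV (pdl w v)" using u v lw by (auto simp: Ck_def)
  then show "continuous_on UNIV (pdl w (\<lambda>x. c * u x + v x))"
    unfolding pdl_lin[OF u v lw] by (intro continuous_intros)
next
  fix w :: "'a list" and i x assume lw: "length w < m"
  have du: "((\<lambda>t. pdl w u (x + t *\<^sub>R axis i 1)) has_vector_derivative pdl (i # w) u x) (at 0)"
    using u lw by (simp add: Ck_def)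
  have dv: "((\<lambda>t. pdl w v (x + t *\<^sub>R axis i 1)) has_vector_derivative pdl (i # w) v x) (at 0)"
    using v lw by (simp add: Ck_def)
  have lw': "length (i # w) \<le> m" using lw by simp
  show "((\<lambda>t. pdl w (\<lambda>x. c * u x + v x) (x + t *\<^sub>R axis i 1)) has_vector_derivative
           pdl (i # w) (\<lambda>x. c * u x + v x) x) (at 0)"
    unfolding pdl_lin[OF u v lw'] pdl_lin[OF u v less_imp_le[OF lw]]
    by (intro has_vector_derivative_add has_vector_derivative_mult_right du dv)
qed

lemma pdl_zero: "pdl w (\<lambda>x. 0) = (\<lambda>x. 0)"
  by (induction w) (auto simp: partial_def fun_eq_iff)

lemma Ck_zero: "Ck m (\<lambda>x. 0)"
  unfolding Ck_def pdl_zero by auto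

lemma sol_zero: "(\<lambda>x. 0) \<in> solutions m a"
  unfolding solutions_def Dop_def by (simp add: Ck_zero pdl_zero)

lemma sol_lin:
  assumes "u \<in> solutions m a" "v \<in> solutions m a"
  shows "(\<lambda>x. c * u x + v x) \<in> solutions m a"
proof -
  have u: "Ck m u" and v: "Ck m v" using assms by (auto simp: solutions_def)
  have "Dop m a (\<lambda>x. c * u x + v x) x = c * Dop m a u x + Dop m a v x" for x
  proof -
    have "Dop m a (\<lambda>x. c * u x + v x) x = (\<Sum>w\<in>{w. length w \<le> m}. c * (a w x * pdl w u x) + a w x * pdl w v x)"
      unfolding Dop_def by (intro sum.cong refl, subst pdl_lin[OF u v]) (auto simp: algebra_simps)
    also have "\<dots> = c * Dop m a u x + Dop m a v x"
      unfolding Dop_def by (simp add: sum.distrib sum_distrib_left)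
    finally show ?thesis .
  qed
  then show ?thesis using assms Ck_lin[OF u v] by (auto simp: solutions_def)
qed

lemma sol_transl:
  assumes "u \<in> solutions m a" and per: "\<And>w x. length w \<le> m \<Longrightarrow> a w (x + g) = a w x"
  shows "(\<lambda>x. u (x + g)) \<in> solutions m a"
proof -
  have "Dop m a (\<lambda>x. u (x + g)) x = Dop m a u (x + g)" for x
    unfolding Dop_def pdl_transl by (intro sum.cong) (auto simp: per)
  then show ?thesis using assms Ck_transl by (auto simp: solutions_def)
qed



inductive Qn :: "(real^'n) set \<Rightarrow> nat \<Rightarrow> (real^'n \<Rightarrow> complex) \<Rightarrow> bool" for G where
  base: "periodic_wrt G f \<Longrightarrow> Qn G n f"
| add: "Qn G n f \<Longrightarrow> Qn G n h \<Longrightarrow> Qn G n (\<lambda>x. f x + h x)"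
| mulx: "Qn G n f \<Longrightarrow> Qn G (Suc n) (\<lambda>x. complex_of_real (x $ i) * f x)"
| up: "Qn G n f \<Longrightarrow> Qn G (Suc n) f"

lemma Qn_zero: "Qn G n (\<lambda>x. 0)"
  by (rule Qn.base) (simp add: periodic_wrt_def)

lemma Qn_scale: "Qn G n f \<Longrightarrow> Qn G n (\<lambda>x. c * f x)"
proof (induction rule: Qn.induct)
  case (base f n) then show ?case by (intro Qn.base) (auto simp: periodic_wrt_def)
next
  case (add n f h) then show ?case using Qn.add[OF add.IH] by (simp add: algebra_simps)
next
  case (mulx n f i) then show ?case using Qn.mulx[OF mulx.IH, of i] by (simp add: algebra_simps)
next
  case (up n f) then show ?case using Qn.up by blast
qed

lemma Qn_lin: "Qn G n f \<Longrightarrow> Qn G n h \<Longrightarrow> Qn G n (\<lambda>x. c * f x + h x)"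
  using Qn.add Qn_scale by blast

lemma Qn_transl: "Qn G n f \<Longrightarrow> g \<in> G \<Longrightarrow> Qn G n (\<lambda>x. f (x + g))"
proof (induction rule: Qn.induct)
  case (base f n)
  then have "(\<lambda>x. f (x + g)) = f" by (auto simp: periodic_wrt_def)
  then show ?case using base Qn.base by simp
next
  case (add n f h) then show ?case using Qn.add by blast
next
  case (mulx n f i)
  have "Qn G (Suc n) (\<lambda>x. complex_of_real (x $ i) * f (x + g) + complex_of_real (g $ i) * f (x + g))"
    using Qn.add[OF Qn.mulx[OF mulx.IH[OF mulx.prems]] Qn.up[OF Qn_scale[OF mulx.IH[OF mulx.prems]]]] by blast
  then show ?case by (simp add: algebra_simps)
next
  case (up n f) then show ?case using Qn.up by blast
qed

lemma Qn_delta_aux: "Qn G k f \<Longrightarrow> g \<in> G \<Longrightarrow>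
   (k = 0 \<longrightarrow> (\<forall>x. f (x + g) = f x)) \<and> (\<forall>n. k = Suc n \<longrightarrow> Qn G n (\<lambda>x. f (x + g) - f x))"
proof (induction rule: Qn.induct)
  case (base f n)
  then have "(\<lambda>x. f (x + g) - f x) = (\<lambda>x. 0)" "\<forall>x. f (x + g) = f x" by (auto simp: periodic_wrt_def)
  then show ?case by (auto intro!: Qn_zero)
next
  case (add n f h)
  then show ?case using Qn.add[of G _ "\<lambda>x. f (x + g) - f x" "\<lambda>x. h (x + g) - h x"]
    by (auto simp: algebra_simps)
next
  case (mulx n f i)
  have ft: "Qn G n (\<lambda>x. f (x + g))" using Qn_transl mulx by blast
  show ?case
  proof (cases n)
    case 0
    then have "\<forall>x. f (x + g) = f x" using mulx by blast
    then have "(\<lambda>x. complex_of_real ((x + g) $ i) * f (x + g) - complex_of_real (x $ i) * f x)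
        = (\<lambda>x. complex_of_real (g $ i) * f x)" by (auto simp: algebra_simps)
    then show ?thesis using Qn_scale[OF mulx.hyps] by simp
  next
    case (Suc n')
    then have d: "Qn G n' (\<lambda>x. f (x + g) - f x)" using mulx by blast
    have "Qn G n (\<lambda>x. complex_of_real (x $ i) * (f (x + g) - f x) + complex_of_real (g $ i) * f (x + g))"
    proof -
      have ft': "Qn G (Suc n') (\<lambda>x. f (x + g))" using ft Suc by simp
      show ?thesis using Qn.add[OF Qn.mulx[OF d, of i] Qn_scale[OF ft']] Suc by simp
    qed
    moreover have "(\<lambda>x. complex_of_real (x $ i) * (f (x + g) - f x) + complex_of_real (g $ i) * f (x + g))
       = (\<lambda>x. complex_of_real ((x + g) $ i) * f (x + g) - complex_of_real (x $ i) * f x)"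
      by (auto simp: algebra_simps)
    ultimately show ?thesis by simp
  qed
next
  case (up n f)
  show ?case
  proof (cases n)
    case 0
    then have "(\<lambda>x. f (x + g) - f x) = (\<lambda>x. 0)" using up by auto
    then show ?thesis by (auto intro!: Qn_zero)
  next
    case (Suc n')
    then show ?thesis using up Qn.up by auto
  qed
qed

lemma Qn_delta: "Qn G (Suc n) f \<Longrightarrow> g \<in> G \<Longrightarrow> Qn G n (\<lambda>x. f (x + g) - f x)"
  using Qn_delta_aux by blast

lemma Qn_0_periodic: "Qn G 0 f \<Longrightarrow> periodic_wrt G f"
  using Qn_delta_aux unfolding periodic_wrt_def by blast

lemma Qn_mono: "k \<le> n \<Longrightarrow> Qn G k f \<Longrightarrow> Qn G n f"
  by (induction n rule: dec_induct) (auto intro: Qn.up)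



lemma fin_dim_mono: "fin_dim B \<Longrightarrow> A \<subseteq> B \<Longrightarrow> fin_dim A"
  unfolding fin_dim_def by blast

lemma per_int: fixes v :: "'a::real_vector" assumes "\<forall>x. f (x + v) = f x" shows "f (x + of_int k *\<^sub>R v) = f x"
proof -
  have n: "f (y + of_nat n *\<^sub>R v) = f y" for y n
  proof (induction n)
    case 0 then show ?case by simp
  next
    case (Suc n)
    have "f (y + of_nat (Suc n) *\<^sub>R v) = f ((y + of_nat n *\<^sub>R v) + v)" by (simp add: algebra_simps)
    also have "\<dots> = f (y + of_nat n *\<^sub>R v)" using assms by blast
    finally show ?case using Suc by simp
  qed
  show ?thesis
  proof (cases "k \<ge> 0")
    case True
    then have "real (nat k) = of_int k" by simp
    then show ?thesis using n[of x "nat k"] by metis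
  next
    case False
    then have k: "real (nat (-k)) = - of_int k" by simp
    have "f x = f ((x + of_int k *\<^sub>R v) + of_nat (nat (-k)) *\<^sub>R v)" unfolding k by (simp add: algebra_simps)
    also have "\<dots> = f (x + of_int k *\<^sub>R v)" by (rule n)
    finally show ?thesis by simp
  qed
qed

lemma lattice_periodic:
  fixes b :: "'n \<Rightarrow> real^'n"
  assumes G: "G = {(\<Sum>i\<in>UNIV. of_int (k i) *\<^sub>R b i) | k :: 'n \<Rightarrow> int. True}"
    and p: "\<forall>i x. f (x + b i) = f x"
  shows "periodic_wrt G f"
proof -
  have s: "f (x + (\<Sum>i\<in>S. of_int (k i) *\<^sub>R b i)) = f x" if "finite S" for S x k
    using that
  proof (induction S arbitrary: x)
    case empty then show ?case by simp
  next
    case (insert i S)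
    have "f (x + (\<Sum>i\<in>insert i S. of_int (k i) *\<^sub>R b i)) = f ((x + (\<Sum>i\<in>S. of_int (k i) *\<^sub>R b i)) + of_int (k i) *\<^sub>R b i)"
      using insert by (simp add: algebra_simps)
    also have "\<dots> = f (x + (\<Sum>i\<in>S. of_int (k i) *\<^sub>R b i))" using per_int p by blast
    finally show ?case using insert by simp
  qed
  show ?thesis unfolding periodic_wrt_def
  proof (intro ballI allI)
    fix g x assume "g \<in> G"
    then obtain k where "g = (\<Sum>i\<in>UNIV. of_int (k i) *\<^sub>R b i)" unfolding G by blast
    then show "f (x + g) = f x" using s[of UNIV x k] by simp
  qed
qed

lemma Qn_monom: fixes j :: "'n::finite \<Rightarrow> nat" and f :: "real^'n \<Rightarrow> complex"
  shows "periodic_wrt G f \<Longrightarrow> Qn G (sum j UNIV) (\<lambda>x. f x * monom j x)"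
proof (induction "sum j UNIV" arbitrary: j)
  case 0
  then have "\<forall>i. j i = 0" by simp
  then have eq: "(\<lambda>x. f x * monom j x) = f" by (simp add: monom_def)
  show ?case unfolding eq by (rule Qn.base[OF 0(2)])
next
  case (Suc s)
  have "\<exists>i. j i > 0"
  proof (rule ccontr)
    assume "\<not> (\<exists>i. j i > 0)"
    then have "\<forall>i. j i = 0" by auto
    then have "sum j UNIV = 0" by simp
    with Suc(2) show False by simp
  qed
  then obtain i where i: "j i > 0" by blast
  define j' where "j' = j(i := j i - 1)"
  have "sum j UNIV = j i + sum j (UNIV - {i})" by (simp add: sum.remove)
  moreover have "sum j' UNIV = j' i + sum j' (UNIV - {i})" by (simp add: sum.remove)
  moreover have "sum j' (UNIV - {i}) = sum j (UNIV - {i})" unfolding j'_def by (intro sum.cong) auto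
  ultimately have sj: "sum j' UNIV = s" using Suc(2) i unfolding j'_def by simp
  have r: "(\<Prod>k\<in>UNIV. (x $ k) ^ j k) = x $ i * (\<Prod>k\<in>UNIV. (x $ k) ^ j' k)" for x :: "real^'n"
  proof -
    have "(\<Prod>k\<in>UNIV. (x $ k) ^ j k) = (x $ i) ^ j i * (\<Prod>k\<in>UNIV - {i}. (x $ k) ^ j k)"
      by (simp add: prod.remove)
    also have "(\<Prod>k\<in>UNIV - {i}. (x $ k) ^ j k) = (\<Prod>k\<in>UNIV - {i}. (x $ k) ^ j' k)"
      unfolding j'_def by (intro prod.cong) auto
    also have "(x $ i) ^ j i = x $ i * (x $ i) ^ j' i"
      using i unfolding j'_def by (cases "j i") auto
    also have "x $ i * (x $ i) ^ j' i * (\<Prod>k\<in>UNIV - {i}. (x $ k) ^ j' k) = x $ i * ((x $ i) ^ j' i * (\<Prod>k\<in>UNIV - {i}. (x $ k) ^ j' k))"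
      by (simp only: mult.assoc)
    also have "(x $ i) ^ j' i * (\<Prod>k\<in>UNIV - {i}. (x $ k) ^ j' k) = (\<Prod>k\<in>UNIV. (x $ k) ^ j' k)"
      by (simp add: prod.remove)
    finally show ?thesis .
  qed
  have "monom j x = complex_of_real (x $ i) * monom j' x" for x
    unfolding monom_def r of_real_mult ..
  then have e: "(\<lambda>x. f x * monom j x) = (\<lambda>x. complex_of_real (x $ i) * (f x * monom j' x))"
    by (simp add: algebra_simps)
  have "Qn G s (\<lambda>x. f x * monom j' x)" using Suc(1)[of j'] sj Suc(3) by simp
  from Qn.mulx[OF this, of i] show ?case unfolding e Suc(2)[symmetric] .
qed

lemma Qn_sum: "(\<forall>j\<in>J. Qn G n (h j)) \<Longrightarrow> Qn G n (\<lambda>x. \<Sum>j\<in>J. h j x)"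
proof (cases "finite J")
  case True
  assume "\<forall>j\<in>J. Qn G n (h j)"
  with True show ?thesis
  proof (induction J)
    case empty then show ?case by (simp add: Qn_zero)
  next
    case (insert j J)
    then show ?case using Qn.add[of G n "h j" "\<lambda>x. \<Sum>j\<in>J. h j x"] by simp
  qed
next
  case False then show ?thesis by (simp add: Qn_zero)
qed

lemma PnG_Qn: "PnG n G S \<subseteq> {u \<in> S. Qn G n u}"
proof
  fix p assume "p \<in> PnG n G S"
  then obtain f where p: "p \<in> S" "\<forall>j. continuous_on UNIV (f j) \<and> periodic_wrt G (f j)"
    "p = (\<lambda>x. \<Sum>j\<in>{j. (\<Sum>i\<in>UNIV. j i) \<le> n}. f j x * monom j x)"
    unfolding PnG_def by blast
  have "Qn G n (\<lambda>x. \<Sum>j\<in>{j. (\<Sum>i\<in>UNIV. j i) \<le> n}. f j x * monom j x)"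
  proof (rule Qn_sum, intro ballI)
    fix j :: "'a \<Rightarrow> nat" assume "j \<in> {j. (\<Sum>i\<in>UNIV. j i) \<le> n}"
    then have "sum j UNIV \<le> n" by simp
    then show "Qn G n (\<lambda>x. f j x * monom j x)" using Qn_mono Qn_monom p(2) by blast
  qed
  then show "p \<in> {u \<in> S. Qn G n u}" using p by simp
qed



theorem corollary3p5:
  fixes G :: "(real^'n) set" and m :: nat and a :: "'n list \<Rightarrow> real^'n \<Rightarrow> complex"
  assumes "full_lattice G"
    and "\<And>w. length w \<le> m \<Longrightarrow> continuous_on UNIV (a w) \<and> periodic_wrt G (a w)"
    and "fin_dim {u \<in> solutions m a. periodic_wrt G u}"
  shows "\<forall>n. fin_dim (PnG n G (solutions m a))"
proof -
  obtain b :: "'n \<Rightarrow> real^'n" where G: "G = {(\<Sum>i\<in>UNIV. of_int (k i) *\<^sub>R b i) | k :: 'n \<Rightarrow> int. True}"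
    using assms(1) unfolding full_lattice_def by blast
  have bG: "b i \<in> G" for i
  proof -
    have "(\<Sum>l\<in>UNIV. of_int (if l = i then 1 else 0) *\<^sub>R b l) = b i"
    proof -
      have "(\<lambda>l. of_int (if l = i then 1 else 0) *\<^sub>R b l) = (\<lambda>l. if l = i then b l else 0)"
        by (auto simp: fun_eq_iff)
      then show ?thesis by (simp only: sum.delta finite UNIV_I if_True)
    qed
    then show ?thesis unfolding G by (intro CollectI exI[of _ "\<lambda>l. if l = i then 1 else 0"]) auto
  qed
  have aper: "a w (x + g) = a w x" if "length w \<le> m" "g \<in> G" for w x g
    using assms(2)[OF that(1)] that(2) unfolding periodic_wrt_def by blast
  define S where "S = solutions m a"
  define V where "V n = {u \<in> S. Qn G n u}" for n
  have fsS: "(fscale c u + v) = (\<lambda>x. c * u x + v x)" for c and u v :: "real^'n \<Rightarrow> complex"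
    by (simp add: fscale_def fun_eq_iff)
  have z0: "(0 :: real^'n \<Rightarrow> complex) = (\<lambda>x. 0)" by (simp add: fun_eq_iff)
  have SG: "fin_dim {u \<in> S. periodic_wrt G u}" using assms(3) unfolding S_def .
  have fV: "fin_dim (V n)" for n
  proof (induction n)
    case 0
    have "V 0 \<subseteq> {u \<in> S. periodic_wrt G u}" unfolding V_def using Qn_0_periodic by blast
    then show ?case using fin_dim_mono SG by blast
  next
    case (Suc n)
    define W where "W J = {u \<in> V (Suc n). \<forall>i\<in>J. \<forall>x. u (x + b i) = u x}" for J
    have "fin_dim (W (UNIV - J))" if "finite J" for J
      using that
    proof (induction J)
      case empty
      have "W (UNIV - {}) \<subseteq> {u \<in> S. periodic_wrt G u}"
        unfolding W_def V_def using lattice_periodic[OF G] by auto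
      then show ?case using fin_dim_mono SG by blast
    next
      case (insert i J)
      define L where "L u = (\<lambda>x. u (x + b i) - u x)" for u :: "real^'n \<Rightarrow> complex"
      let ?W = "W (UNIV - insert i J)"
      show ?case
      proof (rule fin_dim_kernel[of ?W L])
        show "0 \<in> ?W" unfolding z0 W_def V_def S_def using sol_zero Qn_zero by auto
      next
        fix u v c assume u: "u \<in> ?W" and v: "v \<in> ?W"
        show "fscale c u + v \<in> ?W" unfolding fsS
          using u v sol_lin Qn_lin unfolding W_def V_def S_def by auto
        show "L (fscale c u + v) = fscale c (L u) + L v"
          by (simp add: L_def fscale_def fun_eq_iff algebra_simps)
      next
        have "L ` ?W \<subseteq> V n"
        proof
          fix y assume "y \<in> L ` ?W"
          then obtain u where u: "u \<in> ?W" "y = L u" by blast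
          have uS: "u \<in> S" and uQ: "Qn G (Suc n) u" using u unfolding W_def V_def by auto
          have tS: "(\<lambda>x. u (x + b i)) \<in> S" unfolding S_def
            using sol_transl[of u m a "b i"] uS aper bG unfolding S_def by blast
          have "(\<lambda>x. (-1) * u x + u (x + b i)) \<in> S" using sol_lin[of u m a "\<lambda>x. u (x + b i)"] uS tS
            unfolding S_def by blast
          moreover have "(\<lambda>x. (-1) * u x + u (x + b i)) = L u" by (simp add: L_def fun_eq_iff)
          ultimately have "L u \<in> S" by simp
          moreover have "Qn G n (L u)" unfolding L_def using Qn_delta[OF uQ bG] .
          ultimately show "y \<in> V n" unfolding V_def u(2) by simp
        qed
        then show "fin_dim (L ` ?W)" using fin_dim_mono Suc.IH by blast
      next
        have "{v \<in> ?W. L v = 0} \<subseteq> W (UNIV - J)"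
        proof
          fix v assume v: "v \<in> {v \<in> ?W. L v = 0}"
          then have "\<forall>x. v (x + b i) = v x" by (auto simp: L_def fun_eq_iff)
          then show "v \<in> W (UNIV - J)" using v insert(2) unfolding W_def by auto
        qed
        then show "fin_dim {v \<in> ?W. L v = 0}" using fin_dim_mono insert.IH by blast
      qed
    qed
    from this[of UNIV] have "fin_dim (W {})" by simp
    moreover have "W {} = V (Suc n)" unfolding W_def by simp
    ultimately show ?case by simp
  qed
  show ?thesis
  proof
    fix n
    have "PnG n G (solutions m a) \<subseteq> V n" unfolding V_def S_def by (rule PnG_Qn)
    then show "fin_dim (PnG n G (solutions m a))" by (rule fin_dim_mono[OF fV])
  qed
qed

end
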